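(* For every integer $Q \ge 2$, let $F_Q = \{a/q : 1 \le a \le q \le Q,\ \gcd(a,q) = 1\}$ be the $Q$-th Farey sequence, with elements listed in increasing order as $\gamma_1 < \gamma_2 < \cdots < \gamma_{N}$, where $N = |F_Q|$. Define $$S_2(Q) = \sum_{j=1}^{N-1} (\gamma_{j+1} - \gamma_j)^2 \quad\text{and}\quad C(Q) = \frac{S_2(Q)\, Q^2}{\log Q}.$$ Then $C(Q) < 3$ for all integers $Q > 1$.
   Context: $\log$ denotes the natural logarithm. *)

theory Defs
  imports "HOL-Analysis.Analysis"
begin

definition farey :: "nat \<Rightarrow> rat set" where
  "farey Q = {Fract (int a) (int q) | a q. 1 \<le> a \<and> a \<le> q \<and> q \<le> Q \<and> coprime a q}"

text \<open>Elements in increasing order: gamma_1 < ... < gamma_N (0-indexed list here).\<close>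
definition farey_list :: "nat \<Rightarrow> rat list" where
  "farey_list Q = sorted_list_of_set (farey Q)"

definition S2 :: "nat \<Rightarrow> real" where
  "S2 Q = (let g = farey_list Q; N = length g in
     (\<Sum>j = 1..N - 1. (of_rat (g ! j) - of_rat (g ! (j - 1)))^2))"

definition C :: "nat \<Rightarrow> real" where
  "C Q = S2 Q * (real Q)^2 / ln (real Q)"

end

theory Submission
  imports Defs
begin


lemma sq_tel:
  assumes "m \<ge> 1"
  shows "(\<Sum>d\<in>{m..<m+n}. 1/(real d)^2) \<le> 1/(real m - 1/2) - 1/(real m + real n - 1/2)"
proof (induction n)
  case 0
  then show ?case by simp
next
  case (Suc n)
  have t: "real (m+n) \<ge> 1" using assms by simp
  define t where "t = real (m+n)"
  have t1: "t \<ge> 1" using t t_def by simp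
  have key: "1/t^2 \<le> 1/(t - 1/2) - 1/(t+1/2)"
  proof -
    have "1/(t - 1/2) - 1/(t+1/2) = 1/(t^2 - 1/4)" using t1 by (simp add: field_simps power2_eq_square)
    moreover have "1/t^2 \<le> 1/(t^2 - 1/4)"
    proof -
      have tt: "t*t \<ge> 1" using t1 by (metis mult_mono' mult_1 zero_le_one order_trans)
      show ?thesis using tt by (intro divide_left_mono) (auto simp: power2_eq_square intro!: mult_pos_pos)
    qed
    ultimately show ?thesis by simp
  qed
  have "(\<Sum>d\<in>{m..<m+Suc n}. 1/(real d)^2) = (\<Sum>d\<in>{m..<m+n}. 1/(real d)^2) + 1/t^2"
    by (simp add: t_def)
  also have "\<dots> \<le> 1/(real m - 1/2) - 1/(real m + real n - 1/2) + (1/(t - 1/2) - 1/(t+1/2))"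
    using Suc key by linarith
  also have "\<dots> = 1/(real m - 1/2) - 1/(real m + real (Suc n) - 1/2)"
    by (simp add: t_def)
  finally show ?case .
qed

lemma inv_sum: "Q \<ge> 1 \<Longrightarrow> (\<Sum>q\<in>{2..Q}. 1/real q) \<le> ln (real Q)"
proof (induction Q rule: dec_induct[where i=1])
  case base
  then show ?case by simp
next
  case (step n)
  have "ln (real n + 1) - ln (real n) \<ge> 2 * (real n + 1 - real n) / (real n + (real n + 1))"
    using step by (intro ln_inverse_approx_ge) auto
  moreover have "1 / real (Suc n) \<le> 2 * (real n + 1 - real n) / (real n + (real n + 1))"
    using step by (simp add: field_simps)
  moreover have "{2..Suc n} = insert (Suc n) {2..n}" using step by auto
  ultimately show ?case using step by (simp add: add.commute)
qed

lemma half_sum: "n \<ge> 1 \<Longrightarrow> (\<Sum>k\<in>{1..<n}. 1/(real k + 1/2)) \<le> ln (real n)"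
proof (induction n rule: dec_induct[where i=1])
  case base
  then show ?case by simp
next
  case (step n)
  have "ln (real n + 1) - ln (real n) \<ge> 2 * (real n + 1 - real n) / (real n + (real n + 1))"
    using step by (intro ln_inverse_approx_ge) auto
  moreover have "1 / (real n + 1/2) = 2 * (real n + 1 - real n) / (real n + (real n + 1))"
    using step by (simp add: field_simps)
  ultimately show ?case using step by (simp add: add.commute)
qed

lemma rev_sum:
  assumes "Q \<ge> 2"
  shows "(\<Sum>q\<in>{2..Q}. 1/(real Q + 1/2 - real q)) \<le> 2 + ln (real (Q - 1))"
proof -
  have "(\<Sum>q\<in>{2..Q}. 1/(real Q + 1/2 - real q)) = (\<Sum>k\<in>{0..<Q-1}. 1/(real k + 1/2))"
    by (rule sum.reindex_bij_witness[where i="\<lambda>k. Q - k" and j="\<lambda>q. Q - q"]) (use assms in \<open>auto simp: of_nat_diff\<close>)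
  also have "\<dots> = 2 + (\<Sum>k\<in>{1..<Q-1}. 1/(real k + 1/2))"
  proof -
    have "{0..<Q-1} = insert 0 {1..<Q-1}" using assms by auto
    then show ?thesis by simp
  qed
  also have "\<dots> \<le> 2 + ln (real (Q - 1))"
    using half_sum[of "Q-1"] assms by simp
  finally show ?thesis .
qed

lemma T_bound:
  assumes Q: "Q \<ge> 2"
  shows "real Q^2 * (\<Sum>q\<in>{2..Q}. \<Sum>d\<in>{Q+1-q..Q}. 1/(real q * real d)^2) < 3 * ln (real Q)"
proof -
  define R where "R = real Q + 1/2"
  have R: "R > 0" using R_def by simp
  have trm: "(\<Sum>d\<in>{Q+1-q..Q}. 1/(real q * real d)^2) \<le> (1/R^2) * (1/real q + 1/(R - real q))"
    if q: "q \<in> {2..Q}" for q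
  proof -
    have e: "{Q+1-q..Q} = {Q+1-q..<(Q+1-q)+q}" using q by auto
    have "(\<Sum>d\<in>{Q+1-q..Q}. 1/(real q * real d)^2) = (1/real q^2) * (\<Sum>d\<in>{Q+1-q..Q}. 1/(real d)^2)"
      by (simp add: sum_distrib_left power_mult_distrib)
    also have "\<dots> \<le> (1/real q^2) * (1/(real (Q+1-q) - 1/2) - 1/(real (Q+1-q) + real q - 1/2))"
      unfolding e using q by (intro mult_left_mono sq_tel) auto
    also have "\<dots> = (1/R^2) * (1/real q + 1/(R - real q))"
    proof -
      define a where "a = real q"
      define b where "b = R - a"
      have a: "a > 0" using q a_def by simp
      have b: "b > 0" using q unfolding b_def a_def R_def by simp
      have e1: "real (Q+1-q) - 1/2 = b" using q unfolding b_def a_def R_def by (simp add: of_nat_diff)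
      have e2: "real (Q+1-q) + real q - 1/2 = R" using q unfolding R_def by (simp add: of_nat_diff)
      have Rab: "R = a + b" unfolding b_def by simp
      have c1: "(1/a^2) * (1/b - 1/R) = 1/(a*b*R)" using a b unfolding Rab by (simp add: field_simps power2_eq_square)
      have c2: "(1/R^2) * (1/a + 1/b) = 1/(a*b*R)"
      proof -
        have "1/a + 1/b = (a+b)/(a*b)" using a b by (simp add: field_simps)
        then show ?thesis using a b unfolding Rab by (simp add: power2_eq_square)
      qed
      have "(1/real q^2) * (1/(real (Q+1-q) - 1/2) - 1/(real (Q+1-q) + real q - 1/2)) = (1/a^2) * (1/b - 1/R)"
        by (simp only: e1 e2 a_def)
      also have "\<dots> = (1/R^2) * (1/a + 1/b)" using c1 c2 by simp
      also have "\<dots> = (1/R^2) * (1/real q + 1/(R - real q))" by (simp add: a_def b_def)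
      finally show ?thesis .
    qed
    finally show ?thesis .
  qed
  have "(\<Sum>q\<in>{2..Q}. \<Sum>d\<in>{Q+1-q..Q}. 1/(real q * real d)^2)
        \<le> (\<Sum>q\<in>{2..Q}. (1/R^2) * (1/real q + 1/(R - real q)))"
    by (rule sum_mono) (rule trm)
  also have "\<dots> = (1/R^2) * ((\<Sum>q\<in>{2..Q}. 1/real q) + (\<Sum>q\<in>{2..Q}. 1/(R - real q)))"
    by (simp only: sum_distrib_left[symmetric] sum.distrib[symmetric])
  also have "\<dots> \<le> (1/R^2) * (ln (real Q) + (2 + ln (real (Q - 1))))"
    using inv_sum[of Q] rev_sum[OF Q] Q unfolding R_def by (intro mult_left_mono add_mono) auto
  finally have T: "(\<Sum>q\<in>{2..Q}. \<Sum>d\<in>{Q+1-q..Q}. 1/(real q * real d)^2) \<le> (1/R^2) * (ln (real Q) + (2 + ln (real (Q - 1))))" .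
  define L where "L = ln (real Q)"
  have Lpos: "L > 0" using Q unfolding L_def by simp
  have main: "real Q^2 * (L + (2 + ln (real (Q - 1)))) < 3 * L * R^2"
  proof (cases "Q = 2")
    case True
    have "L \<ge> 2/3" using True ln2_ge_two_thirds unfolding L_def by simp
    then show ?thesis using True unfolding R_def by (simp add: power2_eq_square)
  next
    case False
    then have Q3: "Q \<ge> 3" using Q by simp
    have M: "ln (real (Q - 1)) \<le> L" unfolding L_def using Q by (simp add: of_nat_diff)
    have "ln (real Q) - ln 1 \<ge> 2 * (real Q - 1) / (1 + real Q)"
      using Q by (intro ln_inverse_approx_ge) auto
    then have LB: "L * (real Q + 1) \<ge> 2 * (real Q - 1)" unfolding L_def by (simp add: field_simps)
    define x where "x = real Q"
    have x3: "x \<ge> 3" using Q3 unfolding x_def by simp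
    have "x^2 * (2*L + 2) < 3 * L * (x + 1/2)^2"
    proof -
      have "2 * x^2 * (x+1) < 2 * (x - 1) * (x^2 + 3*x + 3/4)"
      proof -
        have "x*x - 9/4*x - 3/4 > 0"
        proof -
          have "x * x \<ge> 3 * x" using x3 by (intro mult_right_mono) auto
          then show ?thesis using x3 by linarith
        qed
        then show ?thesis by (simp add: algebra_simps power2_eq_square power3_eq_cube)
      qed
      also have "\<dots> \<le> L * (x + 1) * (x^2 + 3*x + 3/4)"
        using LB x3 unfolding x_def by (intro mult_right_mono) auto
      finally have "2 * x^2 * (x+1) < L * (x^2 + 3*x + 3/4) * (x + 1)" by (simp add: algebra_simps)
      then have "2 * x^2 < L * (x^2 + 3*x + 3/4)" using x3
        by (metis mult_less_cancel_right_pos add_pos_pos zero_less_one order_less_le_trans zero_less_numeral mult.assoc)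
      then show ?thesis by (simp add: algebra_simps power2_eq_square)
    qed
    moreover have "x^2 * (L + (2 + ln (real (Q - 1)))) \<le> x^2 * (2*L + 2)"
      using M by (intro mult_left_mono) auto
    ultimately show ?thesis unfolding R_def x_def by linarith
  qed
  have "real Q^2 * (\<Sum>q\<in>{2..Q}. \<Sum>d\<in>{Q+1-q..Q}. 1/(real q * real d)^2)
       \<le> real Q^2 * ((1/R^2) * (ln (real Q) + (2 + ln (real (Q - 1)))))"
    using T by (intro mult_left_mono) auto
  also have "\<dots> = real Q^2 * (L + (2 + ln (real (Q - 1)))) / R^2" unfolding L_def by simp
  also have "\<dots> < 3 * L" using main R by (simp add: divide_less_eq)
  finally show ?thesis unfolding L_def .
qed



lemma farey_finite: "finite (farey Q)"
proof -
  have "farey Q \<subseteq> (\<lambda>(a,q). Fract (int a) (int q)) ` ({..Q} \<times> {..Q})"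
    unfolding farey_def by auto
  then show ?thesis by (rule finite_subset) auto
qed

lemma farey_quot:
  assumes "x \<in> farey Q"
  shows "\<exists>a q. quotient_of x = (int a, int q) \<and> 1 \<le> a \<and> a \<le> q \<and> q \<le> Q \<and> coprime a q"
proof -
  obtain a q where x: "x = Fract (int a) (int q)" and h: "1 \<le> a" "a \<le> q" "q \<le> Q" "coprime a q"
    using assms unfolding farey_def by blast
  have "quotient_of x = (int a, int q)"
    unfolding x quotient_of_Fract using h by (intro normalize_stable) auto
  then show ?thesis using h by blast
qed

lemma farey_le: "x \<in> farey Q \<Longrightarrow> 0 < x \<and> x \<le> 1"
  unfolding farey_def by (auto simp: Fract_of_int_quotient)

lemma farey_intro:
  assumes b: "1 \<le> b" and bd: "b \<le> d" and dQ: "d \<le> int Q"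
  shows "Fract b d \<in> farey Q"
proof -
  define g where "g = gcd b d"
  define b' where "b' = b div g"
  define d' where "d' = d div g"
  have gpos: "g > 0" using b unfolding g_def by simp
  have cop: "coprime b' d'" unfolding b'_def d'_def g_def using b by (intro div_gcd_coprime) auto
  have bb: "b = b' * g" unfolding b'_def g_def by simp
  have dd: "d = d' * g" unfolding d'_def g_def by simp
  have b'pos: "b' > 0" using bb b gpos zero_less_mult_pos2[of b' g] by simp
  then have b'1: "b' \<ge> 1" by simp
  have b'd': "b' \<le> d'" using bb dd bd gpos by simp
  have "d' * 1 \<le> d' * g" using gpos b'1 b'd' by (intro mult_left_mono) auto
  then have d'd: "d' \<le> d" using dd by simp
  have F: "Fract b d = Fract b' d'" unfolding b'_def d'_def g_def by (rule Fract_coprime[symmetric])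
  have "Fract b' d' = Fract (int (nat b')) (int (nat d'))" using b'1 b'd' by simp
  moreover have "coprime (nat b') (nat d')" using cop b'1 b'd'
    by (metis coprime_int_iff int_nat_eq order_trans zero_le_one)
  ultimately show ?thesis unfolding F farey_def using b'1 b'd' d'd dQ
    by (intro CollectI exI[of _ "nat b'"] exI[of _ "nat d'"]) auto
qed



definition ddQ :: "nat \<Rightarrow> rat \<Rightarrow> int" where
  "ddQ Q x = (SOME d. int Q - snd (quotient_of x) < d \<and> d \<le> int Q \<and>
                      snd (quotient_of x) dvd fst (quotient_of x) * d + 1)"

lemma exists_d:
  fixes a q :: int and Q :: int
  assumes "coprime a q" "q > 0"
  shows "\<exists>d. Q - q < d \<and> d \<le> Q \<and> q dvd a * d + 1"
proof -
  obtain u v where uv: "u * a + v * q = 1" using bezout_int[of a q] assms(1) by auto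
  define d0 where "d0 = (-u) mod q"
  define d where "d = Q - ((Q - d0) mod q)"
  have r: "0 \<le> (Q - d0) mod q" "(Q - d0) mod q < q" using assms(2) by auto
  have "q dvd d - d0"
  proof -
    have "d - d0 = q * ((Q - d0) div q)" unfolding d_def using div_mult_mod_eq[of "Q - d0" q] by (simp add: algebra_simps)
    then show ?thesis by simp
  qed
  moreover have "q dvd a * d0 + 1"
  proof -
    have k: "d0 + q * ((-u) div q) = -u" unfolding d0_def using div_mult_mod_eq[of "-u" q] by (simp add: algebra_simps)
    have "a * d0 + 1 = a * (d0 + q * ((-u) div q)) - a * q * ((-u) div q) + 1" by (simp add: algebra_simps)
    also have "\<dots> = a * (-u) - a * q * ((-u) div q) + 1" by (simp only: k)
    also have "\<dots> = q * (v - a * ((-u) div q))" using uv by (simp add: algebra_simps)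
    finally have "a * d0 + 1 = q * (v - a * ((-u) div q))" .
    then show ?thesis by simp
  qed
  ultimately have "q dvd a * (d - d0) + (a * d0 + 1)" by simp
  then have "q dvd a * d + 1" by (simp add: algebra_simps)
  moreover have "Q - q < d" "d \<le> Q" unfolding d_def using r by auto
  ultimately show ?thesis by blast
qed

lemma succ_data:
  assumes x: "x \<in> farey Q" and x1: "x < 1" and qx: "quotient_of x = (a, q)"
  shows "2 \<le> q \<and> 1 \<le> a \<and> a < q \<and> q \<le> int Q \<and> coprime a q \<and>
         int Q - q < ddQ Q x \<and> ddQ Q x \<le> int Q \<and> q dvd a * ddQ Q x + 1"
proof -
  obtain a' q' where h: "quotient_of x = (int a', int q')" "1 \<le> a'" "a' \<le> q'" "q' \<le> Q" "coprime a' q'"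
    using farey_quot[OF x] by blast
  have aq: "a = int a'" "q = int q'" using h(1) qx by auto
  have xe: "x = of_int a / of_int q" using qx by (metis Fract_of_int_quotient quotient_of_eq quotient_of_Fract Fract_quotient_of fst_conv snd_conv)
  have "a \<noteq> q" using xe x1 aq h by auto
  then have alt: "a < q" using aq h by simp
  have cop: "coprime a q" using aq h by simp
  have "\<exists>d. int Q - q < d \<and> d \<le> int Q \<and> q dvd a * d + 1"
    using exists_d[OF cop] aq h by simp
  then have "int Q - q < ddQ Q x \<and> ddQ Q x \<le> int Q \<and> q dvd a * ddQ Q x + 1"
    unfolding ddQ_def qx fst_conv snd_conv by (rule someI_ex)
  then show ?thesis using alt cop aq h by auto
qed



lemma succ_elem:
  assumes x: "x \<in> farey Q" and x1: "x < 1" and qx: "quotient_of x = (a, q)"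
  shows "\<exists>z \<in> farey Q. z = x + 1 / (of_int q * of_int (ddQ Q x))"
proof -
  define d where "d = ddQ Q x"
  have D: "2 \<le> q" "1 \<le> a" "a < q" "q \<le> int Q" "int Q - q < d" "d \<le> int Q" "q dvd a * d + 1"
    using succ_data[OF x x1 qx] unfolding d_def by auto
  define b where "b = (a * d + 1) div q"
  have bq: "b * q = a * d + 1" unfolding b_def using D(7) by simp
  have d1: "d \<ge> 1" using D by simp
  have b1: "b \<ge> 1"
  proof -
    have "b * q > 0" using bq D d1 by (simp add: add_pos_nonneg)
    then have "b > 0" using D(1) zero_less_mult_pos2[of b q] by simp
    then show ?thesis by simp
  qed
  have bd: "b \<le> d"
  proof -
    have "a * d \<le> (q - 1) * d" using D d1 by (intro mult_right_mono) auto
    then have "b * q \<le> d * q" using bq d1 by (simp add: algebra_simps)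
    then show ?thesis using D(1) by simp
  qed
  have zin: "Fract b d \<in> farey Q" using farey_intro[OF b1 bd D(6)] .
  have xe: "x = of_int a / of_int q" using qx
    by (metis Fract_of_int_quotient Fract_quotient_of fst_conv snd_conv)
  have "Fract b d = of_int b / of_int d" by (simp add: Fract_of_int_quotient)
  also have "\<dots> = x + 1 / (of_int q * of_int d)"
  proof -
    have qn: "(of_int q :: rat) \<noteq> 0" "(of_int d :: rat) \<noteq> 0" using D d1 by auto
    have "(of_int b :: rat) * of_int q = of_int a * of_int d + 1" using bq by (metis of_int_add of_int_mult of_int_1)
    then show ?thesis unfolding xe using qn by (simp add: field_simps)
  qed
  finally show ?thesis using zin unfolding d_def by auto
qed



lemma dvd_coprime_aux:
  fixes a d q :: int
  assumes "q dvd a * d + 1"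
  shows "coprime d q"
proof (rule coprimeI)
  fix e assume e1: "e dvd d" and e2: "e dvd q"
  have "e dvd a * d + 1" using e2 assms by (rule dvd_trans)
  moreover have "e dvd a * d" using e1 by simp
  ultimately show "is_unit e" by (simp add: dvd_add_right_iff)
qed

definition hh :: "nat \<Rightarrow> rat \<Rightarrow> nat \<times> nat" where
  "hh Q x = (nat (snd (quotient_of x)), nat (ddQ Q x))"

definition GG :: "nat \<times> nat \<Rightarrow> real" where
  "GG p = 1 / (real (fst p) * real (snd p))^2"

lemma hh_range:
  assumes x: "x \<in> farey Q" and x1: "x < 1"
  shows "hh Q x \<in> Sigma {2..Q} (\<lambda>q. {Q+1-q..Q})"
proof -
  obtain a q where qx: "quotient_of x = (a, q)" by (cases "quotient_of x")
  have D: "2 \<le> q" "q \<le> int Q" "int Q - q < ddQ Q x" "ddQ Q x \<le> int Q"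
    using succ_data[OF x x1 qx] by auto
  then show ?thesis unfolding hh_def qx by auto
qed

lemma hh_inj:
  assumes x: "x \<in> farey Q" and x1: "x < 1" and y: "y \<in> farey Q" and y1: "y < 1"
    and e: "hh Q x = hh Q y"
  shows "x = y"
proof -
  obtain a q where qx: "quotient_of x = (a, q)" by (cases "quotient_of x")
  obtain a' q' where qy: "quotient_of y = (a', q')" by (cases "quotient_of y")
  have D: "2 \<le> q" "1 \<le> a" "a < q" "int Q - q < ddQ Q x" "q dvd a * ddQ Q x + 1"
    using succ_data[OF x x1 qx] by auto
  have D': "2 \<le> q'" "1 \<le> a'" "a' < q'" "int Q - q' < ddQ Q y" "q' dvd a' * ddQ Q y + 1"
    using succ_data[OF y y1 qy] by auto
  have "nat q = nat q'" using e unfolding hh_def qx qy by simp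
  then have qq: "q = q'" using D(1) D'(1) by simp
  have "ddQ Q x \<ge> 1" "ddQ Q y \<ge> 1" using D D' succ_data[OF x x1 qx] succ_data[OF y y1 qy] by auto
  moreover have "nat (ddQ Q x) = nat (ddQ Q y)" using e unfolding hh_def by simp
  ultimately have dd: "ddQ Q x = ddQ Q y" by (metis int_nat_eq order_trans zero_le_one)
  define d where "d = ddQ Q x"
  have c: "coprime d q" using D(5) unfolding d_def by (rule dvd_coprime_aux)
  have "q dvd (a * d + 1) - (a' * d + 1)" using D(5) D'(5) qq dd unfolding d_def by (intro dvd_diff) auto
  then have "q dvd (a - a') * d" by (simp add: algebra_simps)
  then have dv: "q dvd (a - a')" using c by (metis coprime_commute coprime_dvd_mult_left_iff)
  have "a = a'"
  proof (rule ccontr)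
    assume "a \<noteq> a'"
    then have "\<bar>q\<bar> \<le> \<bar>a - a'\<bar>" using dv by (intro dvd_imp_le_int) auto
    then show False using D D' qq by auto
  qed
  then have "quotient_of x = quotient_of y" using qx qy qq by simp
  then show ?thesis by (simp add: quotient_of_inject_eq)
qed

lemma gap_bound:
  assumes x: "x \<in> farey Q" and x1: "x < 1" and y: "y \<in> farey Q" and xy: "x < y"
    and succ: "\<And>z. z \<in> farey Q \<Longrightarrow> x < z \<Longrightarrow> y \<le> z"
  shows "(of_rat y - of_rat x :: real)^2 \<le> GG (hh Q x)"
proof -
  obtain a q where qx: "quotient_of x = (a, q)" by (cases "quotient_of x")
  have D: "2 \<le> q" "int Q - q < ddQ Q x" "ddQ Q x \<le> int Q" "q \<le> int Q"
    using succ_data[OF x x1 qx] by auto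
  define d where "d = ddQ Q x"
  have d1: "d \<ge> 1" using D unfolding d_def by simp
  obtain z where z: "z \<in> farey Q" "z = x + 1 / (of_int q * of_int d)"
    using succ_elem[OF x x1 qx] unfolding d_def by blast
  have pos: "(0::rat) < 1 / (of_int q * of_int d)" using D d1 by simp
  have "y \<le> z" using succ z pos by simp
  then have "y - x \<le> 1 / (of_int q * of_int d)" using z by simp
  then have "of_rat (y - x) \<le> (of_rat (1 / (of_int q * of_int d)) :: real)" using of_rat_less_eq by blast
  then have le: "of_rat y - of_rat x \<le> 1 / (real_of_int q * real_of_int d)" by (simp add: of_rat_diff of_rat_divide of_rat_mult)
  have ge: "0 \<le> (of_rat y - of_rat x :: real)" using xy by (simp add: of_rat_less_eq less_imp_le)
  have "(of_rat y - of_rat x :: real)^2 \<le> (1 / (real_of_int q * real_of_int d))^2"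
    using le ge by (intro power_mono) auto
  also have "\<dots> = GG (hh Q x)" unfolding GG_def hh_def qx d_def using D d1 d_def by (simp add: power_divide)
  finally show ?thesis .
qed



lemma S2_bound:
  assumes Q: "Q \<ge> 2"
  shows "S2 Q \<le> (\<Sum>q\<in>{2..Q}. \<Sum>d\<in>{Q+1-q..Q}. 1/(real q * real d)^2)"
proof -
  define g where "g = farey_list Q"
  define N where "N = length g"
  define P where "P = Sigma {2..Q} (\<lambda>q. {Q+1-q..Q})"
  have fin: "finite (farey Q)" by (rule farey_finite)
  have setg: "set g = farey Q" unfolding g_def farey_list_def using fin by simp
  have sw: "sorted_wrt (<) g" unfolding g_def farey_list_def by (rule strict_sorted_list_of_set)
  have dist: "distinct g" unfolding g_def farey_list_def by simp
  have mem: "g ! j \<in> farey Q" if "j < N" for j using that setg N_def by (metis nth_mem)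
  have lt: "g ! i < g ! j" if "i < j" "j < N" for i j using sw that N_def by (simp add: sorted_wrt_iff_nth_less)
  have le: "g ! i \<le> g ! j" if "i \<le> j" "j < N" for i j using lt[of i j] that by (cases "i = j") auto
  have below1: "g ! j < 1" if "j < N - 1" for j
  proof -
    have "g ! j < g ! (Suc j)" using lt that by simp
    also have "\<dots> \<le> 1" using farey_le[OF mem[of "Suc j"]] that by simp
    finally show ?thesis .
  qed
  have step: "(of_rat (g ! j) - of_rat (g ! (j - 1)) :: real)^2 \<le> GG (hh Q (g ! (j - 1)))"
    if j: "j \<in> {1..N-1}" for j
  proof (rule gap_bound)
    show "g ! (j - 1) \<in> farey Q" using j by (intro mem) auto
    show "g ! (j - 1) < 1" using j by (intro below1) auto
    have jN: "j < N" using j by auto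
    show "g ! j \<in> farey Q" using mem[OF jN] .
    show "g ! (j - 1) < g ! j" using lt[OF _ jN] j by simp
    fix z assume z: "z \<in> farey Q" "g ! (j - 1) < z"
    then obtain i where i: "i < N" "g ! i = z" using setg N_def by (metis in_set_conv_nth)
    have "\<not> i \<le> j - 1"
    proof
      assume "i \<le> j - 1"
      moreover have "j - 1 < N" using j by auto
      ultimately have "g ! i \<le> g ! (j - 1)" by (rule le)
      then show False using z i by simp
    qed
    then have "j \<le> i" by simp
    then show "g ! j \<le> z" using le[OF _ i(1)] i(2) by simp
  qed
  have "S2 Q = (\<Sum>j\<in>{1..N-1}. (of_rat (g ! j) - of_rat (g ! (j - 1)))^2)"
    unfolding S2_def g_def N_def Let_def by simp
  also have "\<dots> \<le> (\<Sum>j\<in>{1..N-1}. GG (hh Q (g ! (j - 1))))"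
    by (rule sum_mono) (rule step)
  also have "\<dots> = (\<Sum>j\<in>{..<N-1}. GG (hh Q (g ! j)))"
  proof -
    have "(\<Sum>j\<in>{1..N-1}. GG (hh Q (g ! (j - 1)))) = (\<Sum>j\<in>Suc ` {..<N-1}. GG (hh Q (g ! (j - 1))))"
      by (simp add: image_Suc_lessThan)
    also have "\<dots> = (\<Sum>j\<in>{..<N-1}. GG (hh Q (g ! j)))"
      by (subst sum.reindex) auto
    finally show ?thesis .
  qed
  also have "\<dots> = (\<Sum>p\<in>(\<lambda>j. hh Q (g ! j)) ` {..<N-1}. GG p)"
  proof -
    have "inj_on (\<lambda>j. hh Q (g ! j)) {..<N-1}"
    proof (rule inj_onI)
      fix i j assume i: "i \<in> {..<N-1}" and j: "j \<in> {..<N-1}" and e: "hh Q (g ! i) = hh Q (g ! j)"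
      have "g ! i = g ! j" using hh_inj[OF mem below1 mem below1 e] i j by auto
      then show "i = j" using dist i j N_def by (simp add: nth_eq_iff_index_eq)
    qed
    then show ?thesis by (simp add: sum.reindex)
  qed
  also have "\<dots> \<le> (\<Sum>p\<in>P. GG p)"
  proof (rule sum_mono2)
    show "finite P" unfolding P_def by simp
    show "(\<lambda>j. hh Q (g ! j)) ` {..<N-1} \<subseteq> P"
    proof
      fix p assume "p \<in> (\<lambda>j. hh Q (g ! j)) ` {..<N-1}"
      then obtain j where j: "j < N - 1" "p = hh Q (g ! j)" by auto
      have "j < N" using j by simp
      then show "p \<in> P" unfolding P_def j(2) using hh_range[OF mem below1[OF j(1)]] by simp
    qed
    show "0 \<le> GG b" for b unfolding GG_def by simp
  qed
  also have "\<dots> = (\<Sum>q\<in>{2..Q}. \<Sum>d\<in>{Q+1-q..Q}. 1/(real q * real d)^2)"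
    unfolding P_def GG_def by (subst sum.Sigma) (auto simp: split_def)
  finally show ?thesis .
qed

theorem theorem1:
  fixes Q :: nat
  assumes "Q > 1"
  shows "C Q < 3"
proof -
  have Q: "Q \<ge> 2" using assms by simp
  have lnpos: "ln (real Q) > 0" using Q by simp
  have "S2 Q * (real Q)^2 \<le> (real Q)^2 * (\<Sum>q\<in>{2..Q}. \<Sum>d\<in>{Q+1-q..Q}. 1/(real q * real d)^2)"
    using mult_right_mono[OF S2_bound[OF Q], of "(real Q)^2"] by (simp add: mult.commute)
  also have "\<dots> < 3 * ln (real Q)" by (rule T_bound[OF Q])
  finally show ?thesis unfolding C_def using lnpos by (simp add: divide_less_eq)
qed


end
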